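(* For $r>0$ let $F_r(x)=\min\{x^r,1\}$ for $x\ge 0$. Then \[\lim_{r\to 0^+}\frac{\mathbb{E}_{p\sim F_r}[\mathsf{W}(p,F_r)]}{\mathsf{OPT\text{-}W}(F_r)}=\frac34 .\] Consequently the constant $3/4$ in the bound $\mathbb{E}_{p\sim F}[\mathsf{W}(p,F)]\ge \frac34\mathsf{OPT\text{-}W}(F)$ (valid for all continuous $F$ on $[0,\infty)$ with finite positive mean) cannot be improved.
   Context: Symmetric bilateral trade: $B,S$ i.i.d. with distribution $F$; price $p\sim F$ drawn independently. Trade occurs iff $B\ge p>S$. $\mathsf{W}(p,F)=\mathbb{E}[S]+\mathbb{E}[(B-S)\mathbf 1_{B\ge p>S}]$, $\mathsf{OPT\text{-}W}(F)=\mathbb{E}[\max\{B,S\}]$. *)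

theory Defs
  imports "HOL-Analysis.Analysis"
begin

definition dist_of_cdf :: "(real \<Rightarrow> real) \<Rightarrow> real measure" where
  "dist_of_cdf F = interval_measure F"

text \<open>Welfare at posted price p when B, S are i.i.d. with law M:
  E[S] + E[(B - S) 1(B \<ge> p > S)].\<close>
definition W :: "real \<Rightarrow> real measure \<Rightarrow> real" where
  "W p M = (\<integral>s. s \<partial>M) +
     (\<integral>b. (\<integral>s. (b - s) * (if b \<ge> p \<and> p > s then 1 else 0) \<partial>M) \<partial>M)"

definition EW :: "real measure \<Rightarrow> real" where
  "EW M = (\<integral>p. W p M \<partial>M)"

definition OPT_W :: "real measure \<Rightarrow> real" where
  "OPT_W M = (\<integral>b. (\<integral>s. max b s \<partial>M) \<partial>M)"

definition F_r :: "real \<Rightarrow> real \<Rightarrow> real" where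
  "F_r r x = (if x \<le> 0 then 0 else min (x powr r) 1)"

end

theory Submission imports Defs "HOL-Probability.Probability" begin

lemma powr_hasint:
  fixes c x y :: real
  assumes "c > 0" "0 \<le> x" "x \<le> y"
  shows "((\<lambda>t. t powr c) has_integral (y powr (c+1) - x powr (c+1))/(c+1)) {x..y}"
proof -
  have hy: "((\<lambda>t. t powr c) has_integral (y powr (c+1))/(c+1)) {0..y}"
    using has_integral_powr_from_0[of c y] assms by simp
  have hx: "((\<lambda>t. t powr c) has_integral (x powr (c+1))/(c+1)) {0..x}"
    using has_integral_powr_from_0[of c x] assms by simp
  have "(\<lambda>t. t powr c) integrable_on {x..y}"
    using integrable_subinterval_real[OF has_integral_integrable[OF hy], of x y] assms by auto
  then obtain J where J: "((\<lambda>t. t powr c) has_integral J) {x..y}" by blast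
  have "((\<lambda>t. t powr c) has_integral (x powr (c+1))/(c+1) + J) {0..y}"
    by (rule has_integral_combine[OF assms(2) assms(3) hx J])
  with hy have "(x powr (c+1))/(c+1) + J = y powr (c+1)/(c+1)"
    using has_integral_unique by blast
  then have "J = (y powr (c+1) - x powr (c+1))/(c+1)" by (simp add: diff_divide_distrib)
  with J show ?thesis by simp
qed

lemma lint_eq_hk:
  fixes f :: "real \<Rightarrow> real"
  assumes "continuous_on {x..y} f" "(f has_integral I) {x..y}"
  shows "(LINT t:{x..y}|lborel. f t) = I"
  using set_borel_integral_eq_integral(2)[OF borel_integrable_atLeastAtMost'[OF assms(1)]]
    assms(2) by (simp add: integral_unique)

lemma cont_powr: "c > 0 \<Longrightarrow> continuous_on S (\<lambda>t::real. (max t 0) powr c)"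
  by (intro continuous_on_powr' continuous_intros) auto


definition U :: "real measure" where "U = density lborel (\<lambda>x. ennreal (indicator {0..1::real} x))"
definition Q :: "real \<Rightarrow> real measure" where "Q a = distr U borel (\<lambda>t. t powr a)"

lemma sets_U[simp, measurable_cong]: "sets U = sets borel" by (simp add: U_def)
lemma space_U[simp]: "space U = UNIV" by (simp add: U_def)
lemma sets_Q[simp, measurable_cong]: "sets (Q a) = sets borel" by (simp add: Q_def)
lemma space_Q[simp]: "space (Q a) = UNIV" by (simp add: Q_def)

lemma int_Q:
  fixes f :: "real \<Rightarrow> real"
  assumes [measurable]: "f \<in> borel_measurable borel"
  shows "integral\<^sup>L (Q a) f = (LINT t:{0..1}|lborel. f (t powr a))"
proof -
  have "integral\<^sup>L (Q a) f = integral\<^sup>L U (\<lambda>t. f (t powr a))"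
    unfolding Q_def by (rule integral_distr) auto
  also have "\<dots> = (LINT t:{0..1}|lborel. f (t powr a))"
    unfolding U_def set_lebesgue_integral_def
    by (subst integral_density) auto
  finally show ?thesis .
qed

lemma prob_U: "prob_space U"
proof
  show "emeasure U (space U) = 1"
    unfolding U_def by (simp add: emeasure_density ennreal_indicator)
qed

lemma real_distribution_Q: "real_distribution (Q a)"
proof -
  interpret prob_space U by (rule prob_U)
  interpret P: prob_space "Q a" unfolding Q_def by (rule prob_space_distr) auto
  show ?thesis by unfold_locales auto
qed


lemma measure_U: assumes "A \<in> sets borel" shows "measure U A = measure lborel ({0..1} \<inter> A)"
proof -
  have "emeasure U A = (\<integral>\<^sup>+x. ennreal (indicator {0..1} x) * indicator A x \<partial>lborel)"
    unfolding U_def using assms by (subst emeasure_density) auto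
  also have "\<dots> = (\<integral>\<^sup>+x. indicator ({0..1} \<inter> A) x \<partial>lborel)"
    by (intro nn_integral_cong) (auto simp: indicator_def)
  also have "\<dots> = emeasure lborel ({0..1} \<inter> A)" using assms by (intro nn_integral_indicator) auto
  finally show ?thesis unfolding measure_def by simp
qed

lemma powr_iff:
  fixes t x r :: real
  assumes "r > 0" "t \<ge> 0" "x > 0"
  shows "t powr (1/r) \<le> x \<longleftrightarrow> t \<le> x powr r"
proof
  assume "t powr (1/r) \<le> x"
  then have "(t powr (1/r)) powr r \<le> x powr r" by (intro powr_mono2) (use assms in auto)
  then show "t \<le> x powr r" using assms by (simp add: powr_powr)
next
  assume "t \<le> x powr r"
  then have "t powr (1/r) \<le> (x powr r) powr (1/r)" by (intro powr_mono2) (use assms in auto)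
  then show "t powr (1/r) \<le> x" using assms by (simp add: powr_powr)
qed

lemma cdf_Q: assumes "r > 0" shows "cdf (Q (1/r)) x = F_r r x"
proof -
  have "cdf (Q (1/r)) x = measure lborel ({0..1} \<inter> {t. t powr (1/r) \<le> x})"
    unfolding cdf_def Q_def
    by (subst measure_distr) (auto simp: measure_U vimage_def)
  also have "\<dots> = F_r r x"
  proof (cases "x \<le> 0")
    case True
    have "{0..1} \<inter> {t. t powr (1/r) \<le> x} \<subseteq> {0..0}"
      using True by auto (metis powr_gt_zero less_le_trans not_le)
    then have "measure lborel ({0..1} \<inter> {t. t powr (1/r) \<le> x}) \<le> measure lborel {0..0::real}"
      by (intro measure_mono_fmeasurable) (auto simp: fmeasurable_def emeasure_lborel_countable)
    then show ?thesis using True measure_nonneg[of lborel "{0..1} \<inter> {t. t powr (1/r) \<le> x}"] by (simp add: F_r_def)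
  next
    case False
    show ?thesis
    proof (cases "x < 1")
      case True
      have le1: "x powr r \<le> 1" using True False assms
        by (intro powr_le1) auto
      have "{0..1} \<inter> {t. t powr (1/r) \<le> x} = {0..x powr r}"
        using powr_iff[OF assms _ ] False le1 by auto
      then show ?thesis using False le1 by (simp add: F_r_def)
    next
      case False': False
      have ge: "x powr r \<ge> 1" using False' assms
        by (simp add: ge_one_powr_ge_zero)
      have "{0..1} \<inter> {t. t powr (1/r) \<le> x} = {0..1}"
        using powr_iff[OF assms _ ] False ge by auto
      then show ?thesis using False ge by (simp add: F_r_def)
    qed
  qed
  finally show ?thesis .
qed


lemma F_r_alt: "r > 0 \<Longrightarrow> F_r r = (\<lambda>x. min ((max x 0) powr r) 1)"
  by (auto simp: F_r_def fun_eq_iff max_def)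

lemma F_r_mono: "r > 0 \<Longrightarrow> x \<le> y \<Longrightarrow> F_r r x \<le> F_r r y"
  unfolding F_r_alt by (intro min.mono powr_mono2) auto

lemma F_r_cont: assumes "r > 0" shows "continuous (at_right a) (F_r r)"
proof -
  have "continuous_on UNIV (F_r r)"
    unfolding F_r_alt[OF assms] by (intro continuous_intros continuous_on_powr') (use assms in auto)
  then show ?thesis
    by (simp add: continuous_on_eq_continuous_within continuous_at_imp_continuous_at_within)
qed

lemma F_r_bot: assumes "r > 0" shows "(F_r r \<longlongrightarrow> 0) at_bot"
proof -
  have "eventually (\<lambda>x. F_r r x = 0) at_bot"
    unfolding eventually_at_bot_linorder by (intro exI[of _ 0]) (auto simp: F_r_def)
  then show ?thesis by (rule tendsto_eventually)
qed

lemma F_r_top: assumes "r > 0" shows "(F_r r \<longlongrightarrow> 1) at_top"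
proof -
  have "eventually (\<lambda>x. F_r r x = 1) at_top"
    unfolding eventually_at_top_linorder
    by (intro exI[of _ 1]) (use assms in \<open>auto simp: F_r_def ge_one_powr_ge_zero\<close>)
  then show ?thesis by (rule tendsto_eventually)
qed

lemma dist_Q: assumes "r > 0" shows "dist_of_cdf (F_r r) = Q (1/r)"
  unfolding dist_of_cdf_def
proof (rule cdf_unique)
  show "real_distribution (interval_measure (F_r r))"
    by (rule real_distribution_interval_measure)
       (use assms F_r_mono F_r_cont F_r_bot F_r_top in auto)
  show "real_distribution (Q (1/r))" by (rule real_distribution_Q)
  show "cdf (interval_measure (F_r r)) = cdf (Q (1/r))"
    using cdf_interval_measure[of "F_r r"] assms F_r_mono F_r_cont F_r_bot cdf_Q
    by (auto simp: fun_eq_iff)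
qed


lemma hasint3:
  fixes c d x y \<alpha> \<beta> \<gamma> :: real
  assumes "c > 0" "d > 0" "0 \<le> x" "x \<le> y"
  shows "((\<lambda>t. \<alpha> * t powr c + \<beta> * t powr d + \<gamma>) has_integral
     (\<alpha> * ((y powr (c+1) - x powr (c+1))/(c+1)) + \<beta> * ((y powr (d+1) - x powr (d+1))/(d+1)) + \<gamma> * (y - x))) {x..y}"
proof -
  have 1: "((\<lambda>t. \<alpha> * t powr c) has_integral (\<alpha> * ((y powr (c+1) - x powr (c+1))/(c+1)))) {x..y}"
    by (intro has_integral_mult_right powr_hasint) (use assms in auto)
  have 2: "((\<lambda>t. \<beta> * t powr d) has_integral (\<beta> * ((y powr (d+1) - x powr (d+1))/(d+1)))) {x..y}"
    by (intro has_integral_mult_right powr_hasint) (use assms in auto)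
  have 3: "((\<lambda>t. \<gamma>) has_integral \<gamma> * (y - x)) {x..y}"
    using has_integral_const_real[of \<gamma> x y] assms by (simp add: mult.commute)
  show ?thesis using has_integral_add[OF has_integral_add[OF 1 2] 3] by simp
qed

lemma lint3:
  fixes c d x y \<alpha> \<beta> \<gamma> :: real
  assumes "c > 0" "d > 0" "0 \<le> x" "x \<le> y"
  shows "(LINT t:{x..y}|lborel. \<alpha> * t powr c + \<beta> * t powr d + \<gamma>) =
     \<alpha> * ((y powr (c+1) - x powr (c+1))/(c+1)) + \<beta> * ((y powr (d+1) - x powr (d+1))/(d+1)) + \<gamma> * (y - x)"
proof (rule lint_eq_hk[OF _ hasint3[OF assms]])
  show "continuous_on {x..y} (\<lambda>t. \<alpha> * t powr c + \<beta> * t powr d + \<gamma>)"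
    by (intro continuous_intros continuous_on_powr') (use assms in auto)
qed

lemma lint_cut:
  fixes g :: "real \<Rightarrow> real"
  assumes [measurable]: "g \<in> borel_measurable borel" and "0 \<le> w" "w \<le> 1"
  shows "(LINT v:{0..1}|lborel. (if v < w then g v else 0)) = (LINT v:{0..w}|lborel. g v)"
  unfolding set_lebesgue_integral_def
proof (rule integral_cong_AE)
  show "AE v in lborel. indicat_real {0..1} v *\<^sub>R (if v < w then g v else 0) = indicat_real {0..w} v *\<^sub>R g v"
    using AE_lborel_singleton[of w] by eventually_elim (use assms in \<open>auto simp: indicator_def\<close>)
qed auto

lemma lint_cut2:
  fixes g :: "real \<Rightarrow> real"
  assumes "0 \<le> w"
  shows "(LINT v:{0..1}|lborel. (if w \<le> v then g v else 0)) = (LINT v:{w..1}|lborel. g v)"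
  unfolding set_lebesgue_integral_def
  by (rule Bochner_Integration.integral_cong) (use assms in \<open>auto simp: indicator_def\<close>)

lemma powr_Suc': "(u::real) \<ge> 0 \<Longrightarrow> u * u powr a = u powr (a+1)"
  by (cases "u = 0") (auto simp: powr_add)


lemma powr_base_le_iff:
  fixes u v a :: real
  assumes "a > 0" "0 \<le> u" "0 \<le> v"
  shows "u powr a \<le> v powr a \<longleftrightarrow> u \<le> v"
  using assms powr_mono2[of a u v] powr_less_mono2[of a v u] by force

lemma powr_base_less_iff:
  fixes u v a :: real
  assumes "a > 0" "0 \<le> u" "0 \<le> v"
  shows "u powr a < v powr a \<longleftrightarrow> u < v"
  using powr_base_le_iff[OF assms(1,3,2)] by auto

lemma mean_Q: assumes "a > 0" shows "(\<integral>s. s \<partial>Q a) = 1/(a+1)"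
proof -
  have "(\<integral>s. s \<partial>Q a) = (LINT t:{0..1}|lborel. 1 * t powr a + 0 * t powr 1 + 0)"
    by (subst int_Q) auto
  also have "\<dots> = 1/(a+1)" using assms by (subst lint3) auto
  finally show ?thesis .
qed

lemma OPT_Q: assumes a: "a > 0" shows "OPT_W (Q a) = 2/(a+2)"
proof -
  interpret Qa: prob_space "Q a" using real_distribution_Q[of a] by (simp add: real_distribution_def)
  have inner: "(\<integral>s. max (u powr a) s \<partial>Q a) = a/(a+1) * u powr (a+1) + 1/(a+1)"
    if u: "0 \<le> u" "u \<le> 1" for u
  proof -
    have "(\<integral>s. max (u powr a) s \<partial>Q a) = (LINT v:{0..1}|lborel. max (u powr a) (v powr a))"
      by (subst int_Q) auto
    also have "\<dots> = (LINT v:{0..1}|lborel. (max u v) powr a)"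
      by (rule set_lebesgue_integral_cong) (use u a in \<open>auto simp: max_def powr_base_le_iff\<close>)
    also have "\<dots> = integral {0..1} (\<lambda>v. (max u v) powr a)"
      by (rule set_borel_integral_eq_integral(2), rule borel_integrable_atLeastAtMost')
         (intro continuous_intros continuous_on_powr', use a u in auto)
    also have "\<dots> = u * u powr a + (1 powr (a+1) - u powr (a+1))/(a+1)"
    proof (rule integral_unique, rule has_integral_combine[OF u])
      show "((\<lambda>v. max u v powr a) has_integral u * u powr a) {0..u}"
        using has_integral_const_real[of "u powr a" 0 u] u
        by (subst has_integral_cong[where g="\<lambda>_. u powr a"]) (auto simp: max_def mult.commute)
      show "((\<lambda>v. max u v powr a) has_integral (1 powr (a+1) - u powr (a+1))/(a+1)) {u..1}"
        using powr_hasint[of a u 1] u a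
        by (subst has_integral_cong[where g="\<lambda>v. v powr a"]) (auto simp: max_def)
    qed
    also have "\<dots> = a/(a+1) * u powr (a+1) + 1/(a+1)"
      using u a by (simp add: powr_Suc' field_simps)
    finally show ?thesis .
  qed
  have "OPT_W (Q a) = (LINT u:{0..1}|lborel. (\<integral>s. max (u powr a) s \<partial>Q a))"
    unfolding OPT_W_def by (subst int_Q) (auto intro!: Qa.borel_measurable_lebesgue_integral)
  also have "\<dots> = (LINT u:{0..1}|lborel. a/(a+1) * u powr (a+1) + 0 * u powr 1 + 1/(a+1))"
    by (rule set_lebesgue_integral_cong) (auto simp: inner)
  also have "\<dots> = a/(a+1) * ((1 powr (a+1+1) - 0 powr (a+1+1))/(a+1+1)) + 0 * ((1 powr (1+1) - 0 powr (1+1))/(1+1)) + 1/(a+1) * (1 - 0)"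
    using a by (intro lint3) auto
  also have "\<dots> = a/(a+1) * (1/(a+2)) + 1/(a+1)" using a by (simp add: add.assoc)
  also have "\<dots> = 2/(a+2)"
  proof -
    have "a + 1 \<noteq> 0" "a + 2 \<noteq> 0" using a by auto
    then show ?thesis by (simp add: divide_simps)
  qed
  finally show ?thesis .
qed


lemma EW_Q: assumes a: "a > 0" shows "EW (Q a) = (3/2 - 1/(a+2))/(a+1)"
proof -
  interpret Qa: prob_space "Q a" using real_distribution_Q[of a] by (simp add: real_distribution_def)
  have inner: "(\<integral>s. (u powr a - s) * (if u powr a \<ge> w powr a \<and> w powr a > s then 1 else 0) \<partial>Q a)
      = (if w \<le> u then w * u powr a - w powr (a+1)/(a+1) else 0)"
    if u: "0 \<le> u" "u \<le> 1" and w: "0 \<le> w" "w \<le> 1" for u w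
  proof -
    have "(\<integral>s. (u powr a - s) * (if u powr a \<ge> w powr a \<and> w powr a > s then 1 else 0) \<partial>Q a)
       = (LINT v:{0..1}|lborel. (u powr a - v powr a) * (if u powr a \<ge> w powr a \<and> w powr a > v powr a then 1 else 0))"
      by (subst int_Q) auto
    also have "\<dots> = (if w \<le> u then w * u powr a - w powr (a+1)/(a+1) else 0)"
    proof (cases "w \<le> u")
      case False
      then show ?thesis using u w a by (simp add: powr_base_le_iff)
    next
      case True
      have "(LINT v:{0..1}|lborel. (u powr a - v powr a) * (if u powr a \<ge> w powr a \<and> w powr a > v powr a then 1 else 0))
          = (LINT v:{0..1}|lborel. (if v < w then u powr a - v powr a else 0))"
        by (rule set_lebesgue_integral_cong) (use u w a True in \<open>auto simp: powr_base_le_iff powr_base_less_iff\<close>)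
      also have "\<dots> = (LINT v:{0..w}|lborel. u powr a - v powr a)"
        by (rule lint_cut) (use w in auto)
      also have "\<dots> = (LINT v:{0..w}|lborel. (-1) * v powr a + 0 * v powr 1 + u powr a)"
        by (rule set_lebesgue_integral_cong) auto
      also have "\<dots> = w * u powr a - w powr (a+1)/(a+1)"
        using a w by (subst lint3) (auto simp: algebra_simps)
      finally show ?thesis using True by simp
    qed
    finally show ?thesis .
  qed
  have middle: "(\<integral>b. (\<integral>s. (b - s) * (if b \<ge> w powr a \<and> w powr a > s then 1 else 0) \<partial>Q a) \<partial>Q a)
      = (w - w powr (a+1))/(a+1)"
    if w: "0 \<le> w" "w \<le> 1" for w
  proof -
    have "(\<integral>b. (\<integral>s. (b - s) * (if b \<ge> w powr a \<and> w powr a > s then 1 else 0) \<partial>Q a) \<partial>Q a)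
      = (LINT u:{0..1}|lborel. (\<integral>s. (u powr a - s) * (if u powr a \<ge> w powr a \<and> w powr a > s then 1 else 0) \<partial>Q a))"
      by (subst int_Q) (auto intro!: Qa.borel_measurable_lebesgue_integral)
    also have "\<dots> = (LINT u:{0..1}|lborel. (if w \<le> u then w * u powr a - w powr (a+1)/(a+1) else 0))"
      by (rule set_lebesgue_integral_cong) (use w in \<open>auto simp: inner\<close>)
    also have "\<dots> = (LINT u:{w..1}|lborel. w * u powr a - w powr (a+1)/(a+1))"
      by (rule lint_cut2) (use w in auto)
    also have "\<dots> = (LINT u:{w..1}|lborel. w * u powr a + 0 * u powr 1 + (- (w powr (a+1)/(a+1))))"
      by (rule set_lebesgue_integral_cong) auto
    also have "\<dots> = w * ((1 - w powr (a+1))/(a+1)) - w powr (a+1)/(a+1) * (1 - w)"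
      using a w by (subst lint3) (auto simp: algebra_simps)
    also have "\<dots> = (w - w powr (a+1))/(a+1)"
      using a by (auto simp: divide_simps algebra_simps) (smt (verit) mult_pos_pos)
    finally show ?thesis .
  qed
  have "EW (Q a) = (LINT w:{0..1}|lborel. W (w powr a) (Q a))"
    unfolding EW_def W_def by (subst int_Q) (auto intro!: Qa.borel_measurable_lebesgue_integral)
  also have "\<dots> = (LINT w:{0..1}|lborel. (-1/(a+1)) * w powr (a+1) + (1/(a+1)) * w powr 1 + 1/(a+1))"
  proof (rule set_lebesgue_integral_cong, simp, intro allI impI)
    fix w :: real assume "w \<in> {0..1}"
    then have w: "0 \<le> w" "w \<le> 1" by auto
    have "W (w powr a) (Q a) = 1/(a+1) + (w - w powr (a+1))/(a+1)"
      unfolding W_def by (simp only: middle[OF w] mean_Q[OF a])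
    also have "\<dots> = (-1/(a+1)) * w powr (a+1) + (1/(a+1)) * w powr 1 + 1/(a+1)"
      using w by (simp add: diff_divide_distrib add_divide_distrib)
    finally show "W (w powr a) (Q a) = (-1/(a+1)) * w powr (a+1) + (1/(a+1)) * w powr 1 + 1/(a+1)" .
  qed
  also have "\<dots> = (-1/(a+1)) * ((1 powr (a+1+1) - 0 powr (a+1+1))/(a+1+1)) + (1/(a+1)) * ((1 powr (1+1) - 0 powr (1+1))/(1+1)) + 1/(a+1) * (1 - 0)"
    using a by (intro lint3) auto
  also have "\<dots> = (3/2 - 1/(a+2))/(a+1)"
  proof -
    have "a + 1 \<noteq> 0" "a + 2 \<noteq> 0" using a by auto
    then show ?thesis by (simp add: divide_simps add.assoc) algebra
  qed
  finally show ?thesis .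
qed


lemma key: assumes r: "r > 0"
  shows "EW (dist_of_cdf (F_r r)) = (3 + 4*r)/(4*(1+r)) * OPT_W (dist_of_cdf (F_r r))"
    and "OPT_W (dist_of_cdf (F_r r)) > 0"
proof -
  have a: "1/r > 0" using r by simp
  have e: "EW (dist_of_cdf (F_r r)) = (3/2 - 1/(1/r+2))/(1/r+1)"
    using EW_Q[OF a] dist_Q[OF r] by simp
  have o: "OPT_W (dist_of_cdf (F_r r)) = 2/(1/r+2)"
    using OPT_Q[OF a] dist_Q[OF r] by simp
  show "OPT_W (dist_of_cdf (F_r r)) > 0" unfolding o using a by (simp add: add_pos_pos)
  have "1 + 2*r \<noteq> 0" "1 + r \<noteq> 0" using r by auto
  then show "EW (dist_of_cdf (F_r r)) = (3 + 4*r)/(4*(1+r)) * OPT_W (dist_of_cdf (F_r r))"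
    unfolding e o using r by (simp add: divide_simps) algebra
qed

theorem lemma3:
  shows "(((\<lambda>r. EW (dist_of_cdf (F_r r)) / OPT_W (dist_of_cdf (F_r r))) \<longlongrightarrow> 3 / 4) (at_right 0)) \<and>
    (\<forall>c > 3 / 4. \<exists>r > 0. EW (dist_of_cdf (F_r r)) < c * OPT_W (dist_of_cdf (F_r r)))"
proof
  have ev: "eventually (\<lambda>r. (3 + 4*r)/(4*(1+r)) = EW (dist_of_cdf (F_r r)) / OPT_W (dist_of_cdf (F_r r))) (at_right (0::real))"
    using eventually_at_right_less[of 0]
  proof eventually_elim
    case (elim r)
    then show ?case using key[OF elim] by simp
  qed
  have "((\<lambda>r::real. (3 + 4*r)/(4*(1+r))) \<longlongrightarrow> (3 + 4*0)/(4*(1+0))) (at_right 0)"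
    by (intro tendsto_intros) auto
  then have "((\<lambda>r::real. (3 + 4*r)/(4*(1+r))) \<longlongrightarrow> 3/4) (at_right 0)" by simp
  then show "((\<lambda>r. EW (dist_of_cdf (F_r r)) / OPT_W (dist_of_cdf (F_r r))) \<longlongrightarrow> 3 / 4) (at_right 0)"
    by (rule tendsto_cong[THEN iffD1, OF ev])
next
  show "\<forall>c > 3 / 4. \<exists>r > 0. EW (dist_of_cdf (F_r r)) < c * OPT_W (dist_of_cdf (F_r r))"
  proof (intro allI impI)
    fix c :: real assume c: "c > 3/4"
    define r where "r = c - 3/4"
    have r: "r > 0" using c by (simp add: r_def)
    have lt: "(3 + 4*r)/(4*(1+r)) < c"
    proof -
      have "3 + 4*r < c * (4*(1+r))" using r unfolding r_def by (simp add: algebra_simps)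
      then show ?thesis using r by (simp add: divide_simps)
    qed
    show "\<exists>r > 0. EW (dist_of_cdf (F_r r)) < c * OPT_W (dist_of_cdf (F_r r))"
    proof (intro exI conjI)
      show "r > 0" by (rule r)
      have "(3 + 4*r)/(4*(1+r)) * OPT_W (dist_of_cdf (F_r r)) < c * OPT_W (dist_of_cdf (F_r r))"
        by (rule mult_strict_right_mono[OF lt key(2)[OF r]])
      then show "EW (dist_of_cdf (F_r r)) < c * OPT_W (dist_of_cdf (F_r r))"
        using key(1)[OF r] by simp
    qed
  qed
qed

end
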